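(* Let $k\ge1$ and $b\ge 1$ be integers and $0\le t<k$. Then $$\sigma_{k}^{(b)}(t;1)=\frac{1}{k}\sigma_{k}^{(b)}(t;k)=\frac{1}{k}c_{k}(t).$$
   Context: For a positive integer $m$, $(q)_m=(1-q)\cdots(1-q^m)$, $(q)_0=1$. For integers $b\ge 0$, $k\ge1$ and $1\le s\le k$, let $R^{(b)}_{k,s}(q)=\sum_{t=0}^{k-1}\sigma^{(b)}_k(t;s)q^t$ be the remainder of $\frac{1}{k^b}(q)_{k-1}^{\,b}(q)_{s-1}$ upon division by $1-q^k$. $c_k(t)=\sum_{1\le h\le k,\ \gcd(h,k)=1}e^{2\pi i ht/k}$ is the Ramanujan sum. *)

theory Defs
  imports "HOL-Analysis.Analysis" "HOL-Computational_Algebra.Polynomial"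
begin

definition qpoch :: "nat \<Rightarrow> complex poly" where
  "qpoch m = (\<Prod>i\<in>{1..m}. [:1:] - monom 1 i)"

definition sigma :: "nat \<Rightarrow> nat \<Rightarrow> nat \<Rightarrow> nat \<Rightarrow> complex" where
  "sigma k b t s =
     coeff ((smult (1 / of_nat k ^ b) (qpoch (k - 1) ^ b * qpoch (s - 1)))
            mod ([:1:] - monom 1 k)) t"

definition ramanujan_sum :: "nat \<Rightarrow> nat \<Rightarrow> complex" where
  "ramanujan_sum k t =
     (\<Sum>h\<in>{h. 1 \<le> h \<and> h \<le> k \<and> gcd h k = 1}.
        exp (2 * of_real pi * \<i> * of_nat h * of_nat t / of_nat k))"

end

theory Submission
  imports Defs
begin

definition ee :: "nat \<Rightarrow> nat \<Rightarrow> complex" where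
  "ee k j = exp (2 * of_real pi * \<i> * of_nat j / of_nat k)"

lemma ee_mult: "ee k a * ee k b = ee k (a + b)"
  unfolding ee_def by (simp add: exp_add[symmetric] add_divide_distrib ring_distribs)

lemma ee_pow: "ee k a ^ n = ee k (a * n)"
proof -
  have "ee k a ^ n = exp (of_nat n * (2 * of_real pi * \<i> * of_nat a / of_nat k))"
    unfolding ee_def by (rule exp_of_nat_mult[symmetric])
  also have "\<dots> = ee k (a * n)" unfolding ee_def by (simp add: algebra_simps)
  finally show ?thesis .
qed

lemma ee_eq_1: "k \<ge> 1 \<Longrightarrow> ee k a = 1 \<longleftrightarrow> k dvd a"
  unfolding ee_def by (rule complex_root_unity_eq_1)

lemma ee_eq: "k \<ge> 1 \<Longrightarrow> ee k a = ee k b \<longleftrightarrow> a mod k = b mod k"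
  unfolding ee_def by (rule complex_root_unity_eq)

lemma ee_pow_k: "k \<ge> 1 \<Longrightarrow> ee k a ^ k = 1"
  by (simp add: ee_pow ee_eq_1)

lemma ee_geo: assumes "k \<ge> 1"
  shows "(\<Sum>t<k. ee k (m * t)) = (if k dvd m then of_nat k else 0)"
proof (cases "k dvd m")
  case True
  then have "ee k (m * t) = 1" for t using assms by (simp add: ee_eq_1)
  then show ?thesis using True by simp
next
  case False
  then have ne: "ee k m \<noteq> 1" using assms by (simp add: ee_eq_1)
  have "(\<Sum>t<k. ee k (m * t)) = (\<Sum>t<k. ee k m ^ t)" by (simp add: ee_pow)
  also have "\<dots> = (ee k m ^ k - 1) / (ee k m - 1)" using ne by (simp add: geometric_sum)
  also have "\<dots> = 0" using assms by (simp add: ee_pow_k)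
  finally show ?thesis using False by simp
qed

lemma ee_roots: "k \<ge> 1 \<Longrightarrow> {z. z ^ k = 1} = ee k ` {..<k}"
  using complex_roots_unity[of k] unfolding ee_def by auto

lemma poly_eq_roots:
  fixes p q :: "complex poly"
  assumes k: "k \<ge> 1" and "degree p < k" "degree q < k"
    and eq: "\<And>j. j < k \<Longrightarrow> poly p (ee k j) = poly q (ee k j)"
  shows "p = q"
proof (rule poly_eqI_degree[where A = "{z. z ^ k = 1}"])
  show "card {z::complex. z ^ k = 1} > degree p" "card {z::complex. z ^ k = 1} > degree q"
    using assms card_roots_unity_eq[of k] by auto
  fix x assume "x \<in> {z::complex. z ^ k = 1}"
  then show "poly p x = poly q x" using ee_roots[OF k] eq by auto
qed

lemma poly_one_minus_monom: "poly ([:1:] - monom 1 i) (x::complex) = 1 - x ^ i"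
  by (simp add: Polynomial.poly_monom)

lemma poly_qpoch: "poly (qpoch m) (x::complex) = (\<Prod>i\<in>{1..m}. 1 - x ^ i)"
  unfolding qpoch_def poly_prod by (rule prod.cong) (simp_all only: poly_one_minus_monom)

lemma prod_ee: assumes k: "k \<ge> 1"
  shows "(\<Prod>i\<in>{1..k-1}. 1 - ee k i) = of_nat k"
proof (cases "k = 1")
  case True then show ?thesis by simp
next
  case False
  then have k2: "k \<ge> 2" using k by simp
  define H :: "complex poly" where "H = (\<Sum>i<k. monom 1 i)"
  define G :: "complex poly" where "G = (\<Prod>i\<in>{1..k-1}. [:- ee k i, 1:])"
  have degG: "degree G = k - 1" unfolding G_def
    by (subst degree_prod_sum_eq) auto
  have lcG: "lead_coeff G = 1" unfolding G_def by (simp add: lead_coeff_prod)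
  have cH: "coeff H n = (if n < k then 1 else 0)" for n
    unfolding H_def by (simp add: coeff_sum coeff_monom)
  have degH: "degree H \<le> k - 1"
    by (rule degree_le) (auto simp: cH)
  have "H = G"
  proof (rule poly_eqI_degree_lead_coeff[where n = "k - 1" and A = "ee k ` {1..k-1}"])
    show "coeff H (k - 1) = coeff G (k - 1)" using lcG degG k by (simp add: cH)
    have "inj_on (ee k) {1..k-1}"
      by (rule inj_onI) (use k in \<open>auto simp: ee_eq\<close>)
    then show "card (ee k ` {1..k-1}) \<ge> k - 1" by (simp add: card_image)
    show "degree H \<le> k - 1" by (rule degH)
    show "degree G \<le> k - 1" using degG by simp
    fix z assume "z \<in> ee k ` {1..k-1}"
    then obtain i where i: "i \<in> {1..k-1}" "z = ee k i" by auto
    have z1: "z \<noteq> 1" using i k by (auto simp: ee_eq_1 dest: dvd_imp_le)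
    have "poly H z = (\<Sum>j<k. z ^ j)" unfolding H_def by (simp add: poly_sum Polynomial.poly_monom)
    also have "\<dots> = (z ^ k - 1) / (z - 1)" using z1 by (simp add: geometric_sum)
    also have "\<dots> = 0" using i k by (simp add: ee_pow_k)
    finally have "poly H z = 0" .
    moreover have "poly G z = 0" unfolding G_def poly_prod using i
      by (intro prod_zero) auto
    ultimately show "poly H z = poly G z" by simp
  qed
  then have "poly H 1 = poly G 1" by simp
  moreover have "poly H 1 = of_nat k" unfolding H_def by (simp add: poly_sum Polynomial.poly_monom)
  moreover have "poly G 1 = (\<Prod>i\<in>{1..k-1}. 1 - ee k i)" unfolding G_def poly_prod by simp
  ultimately show ?thesis by simp
qed

lemma qpoch_noncoprime:
  assumes k: "k \<ge> 1" and nc: "\<not> coprime j k"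
  shows "poly (qpoch (k - 1)) (ee k j) = 0"
proof -
  define g where "g = gcd j k"
  define d where "d = k div g"
  have g1: "g > 1" using nc k unfolding g_def
    by (metis coprime_iff_gcd_eq_1 gcd_pos_nat less_one nat_neq_iff not_one_le_zero)
  have gk: "g dvd k" unfolding g_def by simp
  have "g \<le> k" using gk k by (intro dvd_imp_le) auto
  then have d1: "d \<ge> 1" using g1 unfolding d_def
    by (simp add: Suc_le_eq div_greater_zero_iff)
  have dk: "d < k" using g1 k unfolding d_def by simp
  have "k dvd j * d"
  proof -
    obtain a where "j = g * a" unfolding g_def by (metis dvd_def gcd_dvd1)
    then have "j * d = a * (g * d)" by simp
    also have "g * d = k" using gk unfolding d_def by simp
    finally show ?thesis by simp
  qed
  then have "1 - ee k j ^ d = 0" using k by (simp add: ee_pow ee_eq_1)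
  then show ?thesis unfolding poly_qpoch using d1 dk
    by (intro prod_zero) auto
qed

lemma qpoch_coprime:
  assumes k: "k \<ge> 1" and c: "coprime j k"
  shows "poly (qpoch (k - 1)) (ee k j) = of_nat k"
proof -
  define f where "f i = (j * i) mod k" for i
  have inj: "inj_on f {1..k-1}"
  proof -
    have *: "a = b" if a: "a \<in> {1..k-1}" and b: "b \<in> {1..k-1}" and e: "f a = f b" and ab: "b \<le> a" for a b
    proof -
      have "k dvd j * a - j * b" using e ab unfolding f_def
        by (subst mod_eq_dvd_iff_nat[symmetric]) auto
      then have "k dvd j * (a - b)" by (simp add: diff_mult_distrib2)
      then have "k dvd a - b" using c by (metis coprime_commute coprime_dvd_mult_right_iff)
      moreover have "a - b < k" using a k by auto
      ultimately have "a - b = 0" by (metis dvd_imp_le not_less neq0_conv)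
      then show ?thesis using ab by simp
    qed
    show ?thesis
      by (rule inj_onI) (metis * nat_le_linear)
  qed
  have sub: "f ` {1..k-1} \<subseteq> {1..k-1}"
  proof
    fix x assume "x \<in> f ` {1..k-1}"
    then obtain i where i: "i \<in> {1..k-1}" "x = f i" by auto
    have "\<not> k dvd j * i"
    proof
      assume "k dvd j * i"
      then have "k dvd i" using c by (metis coprime_commute coprime_dvd_mult_right_iff)
      then show False using i k by (auto dest: dvd_imp_le)
    qed
    then have "x \<noteq> 0" using i unfolding f_def by (auto simp: dvd_eq_mod_eq_0)
    moreover have "x < k" using k i unfolding f_def by simp
    ultimately show "x \<in> {1..k-1}" by auto
  qed
  have img: "f ` {1..k-1} = {1..k-1}"
    by (rule endo_inj_surj) (use inj sub in auto)
  have "poly (qpoch (k - 1)) (ee k j) = (\<Prod>i\<in>{1..k-1}. 1 - ee k (f i))"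
    unfolding poly_qpoch f_def
    by (rule prod.cong) (use k in \<open>simp_all add: ee_pow ee_eq\<close>)
  also have "\<dots> = (\<Prod>i\<in>f ` {1..k-1}. 1 - ee k i)"
    using prod.reindex[OF inj, of "\<lambda>i. 1 - ee k i"] by simp
  also have "\<dots> = of_nat k" using img prod_ee[OF k] by simp
  finally show ?thesis .
qed

lemma qpoch_ee:
  assumes k: "k \<ge> 1"
  shows "poly (qpoch (k - 1)) (ee k j) = (if coprime j k then of_nat k else 0)"
  using qpoch_coprime[OF k] qpoch_noncoprime[OF k] by auto

definition CC :: "nat \<Rightarrow> complex poly" where
  "CC k = (\<Sum>t<k. monom (ramanujan_sum k t) t)"

lemma coeff_CC: "t < k \<Longrightarrow> coeff (CC k) t = ramanujan_sum k t"
  unfolding CC_def by (simp add: coeff_sum)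

lemma degree_CC: "k \<ge> 1 \<Longrightarrow> degree (CC k) < k"
proof -
  assume k: "k \<ge> 1"
  have "degree (CC k) \<le> k - 1" unfolding CC_def
    by (rule degree_le) (auto simp: coeff_sum)
  then show ?thesis using k by simp
qed

lemma ram_ee: "ramanujan_sum k t = (\<Sum>h\<in>{h. 1 \<le> h \<and> h \<le> k \<and> gcd h k = 1}. ee k (h * t))"
  unfolding ramanujan_sum_def ee_def by (simp add: mult.assoc)

lemma poly_CC:
  assumes k: "k \<ge> 1" and j: "j < k"
  shows "poly (CC k) (ee k j) = (if coprime j k then of_nat k else 0)"
proof -
  define S where "S = {h. 1 \<le> h \<and> h \<le> k \<and> gcd h k = 1}"
  have fin: "finite S" unfolding S_def by (rule finite_subset[of _ "{..k}"]) auto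
  have "poly (CC k) (ee k j) = (\<Sum>t<k. ramanujan_sum k t * ee k j ^ t)"
    unfolding CC_def by (simp add: poly_sum Polynomial.poly_monom)
  also have "\<dots> = (\<Sum>t<k. \<Sum>h\<in>S. ee k ((h + j) * t))"
    unfolding ram_ee S_def sum_distrib_right
    by (simp add: ee_pow ee_mult algebra_simps)
  also have "\<dots> = (\<Sum>h\<in>S. \<Sum>t<k. ee k ((h + j) * t))"
    by (rule sum.swap)
  also have "\<dots> = (\<Sum>h\<in>S. if h = k - j then of_nat k else 0)"
  proof (rule sum.cong[OF refl])
    fix h assume h: "h \<in> S"
    have "k dvd h + j \<longleftrightarrow> h = k - j"
    proof
      assume "k dvd h + j"
      then obtain m where m: "h + j = k * m" by (auto simp: dvd_def)
      have "h + j \<ge> 1" "h + j < 2 * k" using h j unfolding S_def by auto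
      then have "m = 1" using m k
        by (metis One_nat_def less_2_cases_iff mult_0_right mult_less_cancel1 nat_mult_1_right not_one_le_zero mult.commute)
      then show "h = k - j" using m by simp
    qed (use j in simp)
    then show "(\<Sum>t<k. ee k ((h + j) * t)) = (if h = k - j then of_nat k else 0)"
      using ee_geo[OF k, of "h + j"] by simp
  qed
  also have "\<dots> = (if k - j \<in> S then of_nat k else 0)"
    using fin by (simp add: sum.delta)
  also have "(k - j \<in> S) = coprime j k"
  proof -
    have "gcd (k - j) k = gcd j k" using j
      by (metis gcd.commute gcd_diff2_nat less_imp_le_nat)
    then show ?thesis unfolding S_def using j by (auto simp: coprime_iff_gcd_eq_1)
  qed
  finally show ?thesis .
qed

lemma mod_eval:
  assumes k: "k \<ge> 1" and j: "j < k"
  shows "poly (F mod ([:1:] - monom 1 k)) (ee k j) = poly F (ee k j)"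
  by (rule poly_mod) (simp add: Polynomial.poly_monom ee_pow_k[OF k])

lemma degree_mod_M:
  assumes k: "k \<ge> 1"
  shows "degree ((F::complex poly) mod ([:1:] - monom 1 k)) < k"
proof -
  have dM: "degree ([:1:] - monom (1::complex) k) = k"
  proof -
    have "[:1:] - monom (1::complex) k = monom (-1) k + [:1:]" by (rule poly_eqI) (simp add: coeff_monom)
    also have "degree \<dots> = k" using k by (subst degree_add_eq_left) (auto simp: degree_monom_eq)
    finally show ?thesis .
  qed
  then have "[:1:] - monom (1::complex) k \<noteq> 0" using k by auto
  then show ?thesis using degree_mod_less[of "[:1:] - monom (1::complex) k" F] dM k by auto
qed

lemma qpoch0: "qpoch 0 = 1" by (simp add: qpoch_def)

theorem corollary2p6:
  fixes k b t :: nat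
  assumes "k \<ge> 1" and "b \<ge> 1" and "t < k"
  shows "sigma k b t 1 = (1 / of_nat k) * sigma k b t k
       \<and> (1 / of_nat k) * sigma k b t k = (1 / of_nat k) * ramanujan_sum k t"
proof -
  note k = assms(1)
  define M :: "complex poly" where "M = [:1:] - monom 1 k"
  define R1 where "R1 = smult (1 / of_nat k ^ b) (qpoch (k - 1) ^ b * qpoch (1 - 1)) mod M"
  define Rk where "Rk = smult (1 / of_nat k ^ b) (qpoch (k - 1) ^ b * qpoch (k - 1)) mod M"
  have kne: "(of_nat k :: complex) \<noteq> 0" using k by simp
  have b0: "b \<noteq> 0" using assms(2) by simp
  have "R1 = smult (1 / of_nat k) (CC k)"
  proof (rule poly_eq_roots[OF k])
    show "degree R1 < k" unfolding R1_def M_def by (rule degree_mod_M[OF k])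
    show "degree (smult (1 / of_nat k) (CC k)) < k"
      using degree_CC[OF k] by (simp add: degree_smult_le le_less_trans)
    fix j assume j: "j < k"
    show "poly R1 (ee k j) = poly (smult (1 / of_nat k) (CC k)) (ee k j)"
      unfolding R1_def M_def mod_eval[OF k j] poly_smult poly_mult poly_power qpoch_ee[OF k]
      using kne b0 by (simp add: poly_CC[OF k j] qpoch0)
  qed
  moreover have "Rk = CC k"
  proof (rule poly_eq_roots[OF k])
    show "degree Rk < k" unfolding Rk_def M_def by (rule degree_mod_M[OF k])
    show "degree (CC k) < k" using degree_CC[OF k] .
    fix j assume j: "j < k"
    show "poly Rk (ee k j) = poly (CC k) (ee k j)"
      unfolding Rk_def M_def mod_eval[OF k j] poly_smult poly_mult poly_power qpoch_ee[OF k]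
      using kne b0 by (simp add: poly_CC[OF k j] power_Suc[symmetric] del: power_Suc)
  qed
  moreover have "sigma k b t 1 = coeff R1 t" "sigma k b t k = coeff Rk t"
    unfolding sigma_def R1_def Rk_def M_def by simp_all
  ultimately show ?thesis using coeff_CC[OF assms(3)] by simp
qed

end
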